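(* Let $F$ be a field, $A$ a set, and $E$ a thin set of functions $A\to F$. Then the thinly independent subsets of $E$ form the independent sets of a matroid on $E$.
   Context: A set $X$ of functions $A\to F$ is thin if for every $a\in A$ only finitely many $x\in X$ satisfy $x(a)\neq 0$; for thin $X$ and coefficients $\alpha_x\in F$, $\sum_{x\in X}\alpha_x x$ denotes the pointwise sum (well defined by thinness). A set of functions $A\to F$ is thinly independent if for every thin subset $X$ and every family $(\alpha_x)_{x\in X}$ of elements of $F$, $\sum_{x\in X}\alpha_x x=\mathbf 0$ implies $\alpha_x=0$ for all $x\in X$. Matroids may be infinite: a matroid on $E$ is a family $\mathcal I\subseteq 2^E$ (the independent sets) with (I1) $\emptyset\in\mathcal I$; (I2) $\mathcal I$ closed under subsets; (I3) for every non-maximal $I\in\mathcal I$ and maximal $I'\in\mathcal I$ there is $x\in I'\setminus I$ with $I\cup\{x\}\in\mathcal I$; (IM) whenever $I\subseteq X\subseteq E$ and $I\in\mathcal I$, the set $\{I'\in\mathcal I:I\subseteq I'\subseteq X\}$ has a maximal element. *)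

theory Defs
  imports Main
begin

definition thin :: "('a \<Rightarrow> 'f::zero) set \<Rightarrow> bool" where
  "thin X \<longleftrightarrow> (\<forall>a. finite {x \<in> X. x a \<noteq> 0})"

definition thin_sum :: "('a \<Rightarrow> 'f::field) set \<Rightarrow> (('a \<Rightarrow> 'f) \<Rightarrow> 'f) \<Rightarrow> 'a \<Rightarrow> 'f" where
  "thin_sum X \<alpha> = (\<lambda>a. \<Sum>x\<in>{x \<in> X. x a \<noteq> 0}. \<alpha> x * x a)"

definition thinly_independent :: "('a \<Rightarrow> 'f::field) set \<Rightarrow> bool" where
  "thinly_independent S \<longleftrightarrow>
     (\<forall>X \<alpha>. X \<subseteq> S \<longrightarrow> thin X \<longrightarrow> thin_sum X \<alpha> = (\<lambda>a. 0) \<longrightarrow> (\<forall>x\<in>X. \<alpha> x = 0))"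

definition maximal_in :: "'b set set \<Rightarrow> 'b set \<Rightarrow> bool" where
  "maximal_in \<F> M \<longleftrightarrow> M \<in> \<F> \<and> (\<forall>N\<in>\<F>. M \<subseteq> N \<longrightarrow> N = M)"

text \<open>(Possibly infinite) matroid on E given by its independent sets, axioms (I1),(I2),(I3),(IM).\<close>
definition matroid :: "'b set \<Rightarrow> 'b set set \<Rightarrow> bool" where
  "matroid E \<I> \<longleftrightarrow>
     (\<forall>I\<in>\<I>. I \<subseteq> E) \<and>
     {} \<in> \<I> \<and>
     (\<forall>I J. I \<in> \<I> \<longrightarrow> J \<subseteq> I \<longrightarrow> J \<in> \<I>) \<and>
     (\<forall>I I'. I \<in> \<I> \<longrightarrow> \<not> maximal_in \<I> I \<longrightarrow> maximal_in \<I> I' \<longrightarrow>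
         (\<exists>x\<in>I' - I. insert x I \<in> \<I>)) \<and>
     (\<forall>I X. I \<in> \<I> \<longrightarrow> I \<subseteq> X \<longrightarrow> X \<subseteq> E \<longrightarrow>
         (\<exists>M. maximal_in {I'\<in>\<I>. I \<subseteq> I' \<and> I' \<subseteq> X} M))"

end

theory Submission
  imports Defs HOL.Vector_Spaces "HOL-Library.Function_Algebras"
begin

definition fscale :: "'f::field \<Rightarrow> ('x \<Rightarrow> 'f) \<Rightarrow> ('x\<Rightarrow>'f)" where "fscale c v = (\<lambda>x. c * v x)"

global_interpretation fv: vector_space "fscale :: 'f::field \<Rightarrow> ('x \<Rightarrow> 'f) \<Rightarrow> ('x\<Rightarrow>'f)"
  by unfold_locales (auto simp: fscale_def fun_eq_iff algebra_simps)

global_interpretation fp: vector_space_pair "fscale :: 'f::field \<Rightarrow> ('x \<Rightarrow> 'f) \<Rightarrow> ('x\<Rightarrow>'f)" "(*) :: 'f \<Rightarrow> 'f \<Rightarrow> 'f"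
  by unfold_locales (auto simp: fscale_def fun_eq_iff algebra_simps)

definition vv :: "('a \<Rightarrow> 'f::field) set \<Rightarrow> 'a \<Rightarrow> ('a \<Rightarrow> 'f) \<Rightarrow> 'f" where
  "vv E a = (\<lambda>x. if x \<in> E then x a else 0)"
definition dd :: "('a \<Rightarrow> 'f::field) \<Rightarrow> ('a \<Rightarrow> 'f) \<Rightarrow> 'f" where
  "dd e = (\<lambda>x. if x = e then 1 else 0)"
definition sp :: "('a \<Rightarrow> 'f::field) set \<Rightarrow> ('a \<Rightarrow> 'f) set \<Rightarrow> (('a \<Rightarrow> 'f) \<Rightarrow> 'f) set" where
  "sp E T = fv.span (range (vv E) \<union> dd ` T)"

lemma inj_dd: "inj dd"
proof (rule injI)
  fix x y :: "'a \<Rightarrow> 'f::field" assume "dd x = dd y"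
  then have "dd x x = dd y x" by simp
  then show "x = y" by (auto simp: dd_def split: if_splits)
qed

lemma sum_fun_apply: "(sum f T) y = sum (\<lambda>x. f x y) T"
  by (induction T rule: infinite_finite_induct) auto

lemma thin_subset: "thin E \<Longrightarrow> X \<subseteq> E \<Longrightarrow> thin X"
  unfolding thin_def
proof (intro allI)
  fix a assume "\<forall>a. finite {x \<in> E. x a \<noteq> 0}" "X \<subseteq> E"
  moreover have "{x \<in> X. x a \<noteq> 0} \<subseteq> {x \<in> E. x a \<noteq> 0}" using \<open>X \<subseteq> E\<close> by blast
  ultimately show "finite {x \<in> X. x a \<noteq> 0}" using finite_subset by blast
qed

lemma ti_iff:
  assumes "thin S"
  shows "thinly_independent S \<longleftrightarrow> (\<forall>\<beta>. thin_sum S \<beta> = (\<lambda>a. 0) \<longrightarrow> (\<forall>x\<in>S. \<beta> x = 0))"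
proof
  assume "thinly_independent S" then show "\<forall>\<beta>. thin_sum S \<beta> = (\<lambda>a. 0) \<longrightarrow> (\<forall>x\<in>S. \<beta> x = 0)"
    using assms unfolding thinly_independent_def by blast
next
  assume H: "\<forall>\<beta>. thin_sum S \<beta> = (\<lambda>a. 0) \<longrightarrow> (\<forall>x\<in>S. \<beta> x = 0)"
  show "thinly_independent S"
    unfolding thinly_independent_def
  proof (intro allI impI)
    fix X \<alpha> assume XS: "X \<subseteq> S" and "thin X" and z: "thin_sum X \<alpha> = (\<lambda>a. 0)"
    define \<beta> where "\<beta> x = (if x \<in> X then \<alpha> x else 0)" for x
    have "thin_sum S \<beta> a = thin_sum X \<alpha> a" for a
      unfolding thin_sum_def
      by (rule sum.mono_neutral_cong_right) (use assms XS in \<open>auto simp: thin_def \<beta>_def\<close>)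
    then have "thin_sum S \<beta> = (\<lambda>a. 0)" using z by (auto simp: fun_eq_iff)
    then have "\<forall>x\<in>S. \<beta> x = 0" using H by blast
    then show "\<forall>x\<in>X. \<alpha> x = 0" proof (intro ballI)
      fix x assume "x \<in> X"
      then have "\<beta> x = 0" using XS \<open>\<forall>x\<in>S. \<beta> x = 0\<close> by blast
      then show "\<alpha> x = 0" using \<open>x \<in> X\<close> by (simp add: \<beta>_def)
    qed
  qed
qed

lemma fv_subspace_def: "fv.subspace S \<longleftrightarrow> 0 \<in> S \<and> (\<forall>x\<in>S. \<forall>y\<in>S. x + y \<in> S) \<and> (\<forall>c. \<forall>x\<in>S. fscale c x \<in> S)"
  by (rule fv.subspace_def)

lemma char_back:
  fixes E :: "('a \<Rightarrow> 'f::field) set"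
  assumes thin: "thin E" and SE: "S \<subseteq> E" and sp: "\<forall>e\<in>S. dd e \<in> sp E (E - S)"
  shows "thinly_independent S"
proof -
  have thS: "thin S" using thin SE by (rule thin_subset)
  show ?thesis unfolding ti_iff[OF thS]
  proof (intro allI impI ballI)
    fix \<beta> e assume z: "thin_sum S \<beta> = (\<lambda>a. 0)" and eS: "e \<in> S"
    define P where "P w \<longleftrightarrow> (\<exists>F. finite F \<and> F \<subseteq> S \<and> (\<forall>x\<in>S-F. w x = 0) \<and> (\<Sum>x\<in>F. \<beta> x * w x) = 0)"
      for w :: "('a \<Rightarrow> 'f) \<Rightarrow> 'f"
    have ext: "(\<Sum>x\<in>G. \<beta> x * w x) = 0"
      if "finite G" "F \<subseteq> G" "G \<subseteq> S" "\<forall>x\<in>S-F. w x = 0" "(\<Sum>x\<in>F. \<beta> x * w x) = 0" for F G w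
    proof -
      have "(\<Sum>x\<in>G. \<beta> x * w x) = (\<Sum>x\<in>F. \<beta> x * w x)"
        by (rule sum.mono_neutral_right) (use that in auto)
      then show ?thesis using that by simp
    qed
    have sub: "fv.subspace (Collect P)"
      unfolding fv_subspace_def
    proof (intro conjI ballI allI)
      show "0 \<in> Collect P" unfolding P_def by (auto intro!: exI[of _ "{}"])
    next
      fix w1 w2 assume "w1 \<in> Collect P" "w2 \<in> Collect P"
      then obtain F1 F2 where F1: "finite F1" "F1 \<subseteq> S" "\<forall>x\<in>S-F1. w1 x = 0" "(\<Sum>x\<in>F1. \<beta> x * w1 x) = 0"
        and F2: "finite F2" "F2 \<subseteq> S" "\<forall>x\<in>S-F2. w2 x = 0" "(\<Sum>x\<in>F2. \<beta> x * w2 x) = 0"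
        unfolding P_def by auto
      have a: "(\<Sum>x\<in>F1 \<union> F2. \<beta> x * w1 x) = 0" by (rule ext[OF _ _ _ F1(3,4)]) (use F1 F2 in auto)
      have b: "(\<Sum>x\<in>F1 \<union> F2. \<beta> x * w2 x) = 0" by (rule ext[OF _ _ _ F2(3,4)]) (use F1 F2 in auto)
      have "(\<Sum>x\<in>F1 \<union> F2. \<beta> x * (w1 + w2) x) = (\<Sum>x\<in>F1 \<union> F2. \<beta> x * w1 x) + (\<Sum>x\<in>F1 \<union> F2. \<beta> x * w2 x)"
        by (simp add: distrib_left sum.distrib)
      then show "w1 + w2 \<in> Collect P" unfolding P_def using a b F1 F2
        by (intro CollectI exI[of _ "F1 \<union> F2"]) auto
    next
      fix c w assume "w \<in> Collect P"
      then obtain F where F: "finite F" "F \<subseteq> S" "\<forall>x\<in>S-F. w x = 0" "(\<Sum>x\<in>F. \<beta> x * w x) = 0"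
        unfolding P_def by auto
      have "(\<Sum>x\<in>F. \<beta> x * fscale c w x) = (\<Sum>x\<in>F. c * (\<beta> x * w x))"
        by (rule sum.cong) (simp_all add: fscale_def mult.left_commute)
      also have "\<dots> = c * (\<Sum>x\<in>F. \<beta> x * w x)"
        by (rule sum_distrib_left[symmetric])
      finally have "(\<Sum>x\<in>F. \<beta> x * fscale c w x) = c * (\<Sum>x\<in>F. \<beta> x * w x)" .
      then show "fscale c w \<in> Collect P" unfolding P_def using F
        by (intro CollectI exI[of _ F]) (auto simp: fscale_def)
    qed
    have gen: "P w" if "w \<in> range (vv E) \<union> dd ` (E - S)" for w
      using that
    proof
      assume "w \<in> range (vv E)"
      then obtain a where wa: "w = vv E a" by auto
      have "finite {x\<in>S. x a \<noteq> 0}" using thS by (auto simp: thin_def)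
      moreover have "(\<Sum>x\<in>{x\<in>S. x a \<noteq> 0}. \<beta> x * w x) = thin_sum S \<beta> a"
        unfolding thin_sum_def wa vv_def by (rule sum.cong) (use SE in auto)
      ultimately show "P w" unfolding P_def using z SE
        by (intro exI[of _ "{x\<in>S. x a \<noteq> 0}"]) (auto simp: wa vv_def)
    next
      assume "w \<in> dd ` (E - S)"
      then obtain f where "f \<in> E - S" "w = dd f" by auto
      then show "P w" unfolding P_def by (intro exI[of _ "{}"]) (auto simp: dd_def)
    qed
    have "dd e \<in> fv.span (range (vv E) \<union> dd ` (E - S))" using sp eS unfolding sp_def by blast
    from fv.span_induct[OF this sub gen] have "P (dd e)" .
    then obtain F where F: "finite F" "F \<subseteq> S" "\<forall>x\<in>S-F. dd e x = 0" "(\<Sum>x\<in>F. \<beta> x * dd e x) = 0"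
      unfolding P_def by auto
    have "e \<in> F"
    proof (rule ccontr)
      assume "e \<notin> F" then have "dd e e = 0" using F(3) eS by blast
      then show False by (simp add: dd_def)
    qed
    have "(\<Sum>x\<in>F. \<beta> x * dd e x) = (\<Sum>x\<in>F. if x = e then \<beta> x else 0)"
      by (rule sum.cong) (auto simp: dd_def)
    also have "\<dots> = \<beta> e" using \<open>e \<in> F\<close> F(1) by (simp add: sum.delta)
    finally show "\<beta> e = 0" using F(4) by simp
  qed
qed

lemma vv_sum:
  assumes "thin E"
  shows "vv E a = (\<Sum>x\<in>{x\<in>E. x a \<noteq> 0}. fscale (x a) (dd x))"
proof
  fix y
  have "(\<Sum>x\<in>{x\<in>E. x a \<noteq> 0}. fscale (x a) (dd x)) y = (\<Sum>x\<in>{x\<in>E. x a \<noteq> 0}. fscale (x a) (dd x) y)"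
    by (rule sum_fun_apply)
  also have "\<dots> = (\<Sum>x\<in>{x\<in>E. x a \<noteq> 0}. if y = x then x a else 0)"
    by (rule sum.cong) (auto simp: fscale_def dd_def)
  also have "\<dots> = (if y \<in> {x\<in>E. x a \<noteq> 0} then y a else 0)"
    using assms by (simp add: thin_def)
  also have "\<dots> = vv E a y" by (auto simp: vv_def)
  finally show "vv E a y = (\<Sum>x\<in>{x\<in>E. x a \<noteq> 0}. fscale (x a) (dd x)) y" by simp
qed

lemma char_fwd:
  fixes E :: "('a \<Rightarrow> 'f::field) set"
  assumes thin: "thin E" and SE: "S \<subseteq> E" and ti: "thinly_independent S" and eS: "e \<in> S"
  shows "dd e \<in> sp E (E - S)"
proof (rule ccontr)
  let ?U = "sp E (E - S)"
  assume ne: "dd e \<notin> ?U"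
  have subU: "fv.subspace ?U" unfolding sp_def by (rule fv.subspace_span)
  obtain B where B: "B \<subseteq> ?U" "fv.independent B" "?U \<subseteq> fv.span B"
    by (rule fv.maximal_independent_subset)
  have spB: "fv.span B \<subseteq> ?U" using B(1) subU by (rule fv.span_minimal)
  have "dd e \<notin> fv.span B" using spB ne by blast
  then have ind: "fv.independent (insert (dd e) B)" using B(2) by (rule fv.independent_insertI)
  obtain g where g: "Vector_Spaces.linear fscale (*) g"
      "\<forall>x\<in>insert (dd e) B. g x = (if x = dd e then (1::'f) else 0)"
    using fp.linear_independent_extend[OF ind, of "\<lambda>x. if x = dd e then 1 else 0"] by blast
  have deB: "dd e \<notin> B" using B(1) ne by blast
  have gB: "g x = 0" if "x \<in> B" for x using g(2) that deB by auto
  have g0: "g u = 0" if "u \<in> ?U" for u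
    using fp.linear_eq_0_on_span[OF g(1) gB] B(3) that by blast
  have ge: "g (dd e) = 1" using g(2) by simp
  define \<alpha> where "\<alpha> x = g (dd x)" for x
  have thS: "thin S" using thin SE by (rule thin_subset)
  have "thin_sum S \<alpha> = (\<lambda>a. 0)"
  proof
    fix a
    let ?Ea = "{x\<in>E. x a \<noteq> 0}" and ?Sa = "{x\<in>S. x a \<noteq> 0}"
    have fin: "finite ?Ea" using thin by (simp add: thin_def)
    have "vv E a \<in> ?U" unfolding sp_def by (rule fv.span_base) blast
    then have "0 = g (vv E a)" using g0 by simp
    also have "\<dots> = (\<Sum>x\<in>?Ea. g (fscale (x a) (dd x)))"
      unfolding vv_sum[OF thin] by (rule fp.linear_sum[OF g(1)])
    also have "\<dots> = (\<Sum>x\<in>?Ea. \<alpha> x * x a)"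
      by (rule sum.cong) (simp_all add: fp.linear_scale[OF g(1)] \<alpha>_def)
    also have "\<dots> = (\<Sum>x\<in>?Sa. \<alpha> x * x a)"
    proof (rule sum.mono_neutral_right[OF fin])
      show "?Sa \<subseteq> ?Ea" using SE by blast
      show "\<forall>i\<in>?Ea - ?Sa. \<alpha> i * i a = 0"
      proof
        fix i assume "i \<in> ?Ea - ?Sa"
        then have "i \<in> E - S" by blast
        then have "dd i \<in> ?U" unfolding sp_def by (intro fv.span_base) blast
        then show "\<alpha> i * i a = 0" using g0 by (simp add: \<alpha>_def)
      qed
    qed
    finally show "thin_sum S \<alpha> a = 0" by (simp add: thin_sum_def)
  qed
  then have "\<alpha> e = 0" using ti eS unfolding ti_iff[OF thS] by blast
  then show False using ge by (simp add: \<alpha>_def)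
qed

lemma Ind_iff:
  fixes E :: "('a \<Rightarrow> 'f::field) set"
  assumes "thin E" "S \<subseteq> E"
  shows "thinly_independent S \<longleftrightarrow> dd ` E \<subseteq> sp E (E - S)"
proof
  assume "thinly_independent S"
  then have "\<forall>e\<in>S. dd e \<in> sp E (E - S)" using char_fwd assms by blast
  moreover have "\<forall>e\<in>E - S. dd e \<in> sp E (E - S)" unfolding sp_def by (auto intro: fv.span_base)
  ultimately show "dd ` E \<subseteq> sp E (E - S)" by blast
next
  assume "dd ` E \<subseteq> sp E (E - S)"
  then show "thinly_independent S" using char_back assms by blast
qed

lemma sp_mono: "T \<subseteq> T' \<Longrightarrow> sp E T \<subseteq> sp E T'"
  unfolding sp_def by (intro fv.span_mono) blast

lemma sp_subI: "range (vv E) \<union> dd ` T \<subseteq> fv.span G \<Longrightarrow> sp E T \<subseteq> fv.span G"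
  unfolding sp_def by (rule fv.span_minimal) auto

lemma absorb:
  assumes "dd z \<in> sp E (T - {z})"
  shows "sp E T \<subseteq> sp E (T - {z})"
proof -
  have "range (vv E) \<union> dd ` T \<subseteq> sp E (T - {z})"
  proof
    fix v assume v: "v \<in> range (vv E) \<union> dd ` T"
    show "v \<in> sp E (T - {z})"
    proof (cases "v = dd z")
      case True then show ?thesis using assms by simp
    next
      case False then have "v \<in> range (vv E) \<union> dd ` (T - {z})" using v by blast
      then show ?thesis unfolding sp_def by (rule fv.span_base)
    qed
  qed
  then show ?thesis unfolding sp_def by (rule fv.span_minimal) (rule fv.subspace_span)
qed

lemma sp_finitary:
  assumes "v \<in> sp E T"
  shows "\<exists>T'. finite T' \<and> T' \<subseteq> T \<and> v \<in> sp E T'"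
proof -
  from assms obtain t r where t: "v = (\<Sum>a\<in>t. fscale (r a) a)" "finite t" "t \<subseteq> range (vv E) \<union> dd ` T"
    unfolding sp_def fv.span_explicit by blast
  have vt: "v \<in> fv.span t" unfolding fv.span_explicit using t by blast
  define T' where "T' = {z\<in>T. dd z \<in> t}"
  have "finite (dd -` t)" using t(2) inj_dd by (rule finite_vimageI)
  then have fin: "finite T'" unfolding T'_def by (rule finite_subset[rotated]) auto
  have "t \<subseteq> range (vv E) \<union> dd ` T'" using t(3) unfolding T'_def by blast
  then have "fv.span t \<subseteq> sp E T'" unfolding sp_def by (rule fv.span_mono)
  then show ?thesis using fin vt by (intro exI[of _ T']) (auto simp: T'_def)
qed

lemma exch_n:
  assumes min: "\<forall>z\<in>B'. dd z \<notin> sp E (B' - {z})"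
  shows "\<forall>y T. finite T \<longrightarrow> y \<in> B \<longrightarrow> T \<subseteq> B - {y} \<longrightarrow> dd y \<in> sp E T \<longrightarrow> card (T - B') = n
           \<longrightarrow> (\<exists>x\<in>B - B'. dd x \<in> sp E (B - {x}))"
proof (induction n rule: less_induct)
  case (less n)
  show ?case
  proof (intro allI impI)
    fix y T assume fT: "finite T" and yB: "y \<in> B" and TB: "T \<subseteq> B - {y}" and yT: "dd y \<in> sp E T"
      and cn: "card (T - B') = n"
    show "\<exists>x\<in>B - B'. dd x \<in> sp E (B - {x})"
    proof (cases "y \<in> B'")
      case False
      have "sp E T \<subseteq> sp E (B - {y})" using TB by (rule sp_mono)
      then show ?thesis using False yB yT by blast
    next
      case yB': True
      show ?thesis
      proof (cases "T - B' = {}")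
        case True
        then have "T \<subseteq> B' - {y}" using TB by blast
        then have "dd y \<in> sp E (B' - {y})" using yT sp_mono by blast
        then show ?thesis using min yB' by blast
      next
        case False
        then obtain t where tT: "t \<in> T" and tB': "t \<notin> B'" by blast
        show ?thesis
        proof (cases "dd y \<in> sp E (T - {t})")
          case True
          have "card (T - {t} - B') < card (T - B')"
            using fT tT tB' by (intro psubset_card_mono) auto
          then have "card (T - {t} - B') < n" using cn by simp
          from less[rule_format, OF this _ yB _ True] fT TB show ?thesis by blast
        next
          case False
          have eq: "range (vv E) \<union> dd ` T = insert (dd t) (range (vv E) \<union> dd ` (T - {t}))"
            using tT by blast
          have "dd y \<in> fv.span (insert (dd t) (range (vv E) \<union> dd ` (T - {t})))"
            using yT unfolding sp_def eq .
          from fv.in_span_insert[OF this] False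
          have "dd t \<in> fv.span (insert (dd y) (range (vv E) \<union> dd ` (T - {t})))"
            unfolding sp_def by blast
          also have "insert (dd y) (range (vv E) \<union> dd ` (T - {t})) = range (vv E) \<union> dd ` (insert y (T - {t}))"
            by blast
          finally have "dd t \<in> sp E (insert y (T - {t}))" unfolding sp_def .
          moreover have "insert y (T - {t}) \<subseteq> B - {t}" using TB yB yB' tB' by blast
          ultimately have "dd t \<in> sp E (B - {t})" using sp_mono by blast
          moreover have "t \<in> B - B'" using tT TB tB' by blast
          ultimately show ?thesis by blast
        qed
      qed
    qed
  qed
qed

lemma exch:
  assumes min: "\<forall>z\<in>B'. dd z \<notin> sp E (B' - {z})"
    and yB: "y \<in> B" and yS: "dd y \<in> sp E (B - {y})"
  shows "\<exists>x\<in>B - B'. dd x \<in> sp E (B - {x})"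
proof -
  obtain T where "finite T" "T \<subseteq> B - {y}" "dd y \<in> sp E T" using sp_finitary[OF yS] by blast
  then show ?thesis using exch_n[OF min] yB by blast
qed

lemma ins_ind:
  fixes E :: "('a \<Rightarrow> 'f::field) set"
  assumes thin: "thin E" and I: "I \<subseteq> E" "dd ` E \<subseteq> sp E (E - I)" and zE: "z \<in> E"
    and z: "dd z \<in> sp E ((E - I) - {z})"
  shows "insert z I \<subseteq> E \<and> thinly_independent (insert z I)"
proof -
  have "sp E (E - I) \<subseteq> sp E ((E - I) - {z})" using z by (rule absorb)
  moreover have "E - insert z I = (E - I) - {z}" by blast
  ultimately have "dd ` E \<subseteq> sp E (E - insert z I)" using I(2) by auto
  then show ?thesis using Ind_iff[OF thin] I(1) zE by blast
qed

theorem theorem6p1: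
  fixes E :: "('a \<Rightarrow> 'f::field) set"
  assumes "thin E"
  shows "matroid E {S. S \<subseteq> E \<and> thinly_independent S}"
proof -
  let ?I = "{S. S \<subseteq> E \<and> thinly_independent S}"
  have ind: "S \<in> ?I \<longleftrightarrow> S \<subseteq> E \<and> dd ` E \<subseteq> sp E (E - S)" for S
    using Ind_iff[OF assms, of S] by blast
  have I3: "\<exists>x\<in>I' - I. insert x I \<in> ?I"
    if I: "I \<in> ?I" and nm: "\<not> maximal_in ?I I" and mx: "maximal_in ?I I'" for I I'
  proof -
    obtain J where J: "J \<in> ?I" "I \<subseteq> J" "J \<noteq> I" using nm I unfolding maximal_in_def by blast
    then obtain y where y: "y \<in> J" "y \<notin> I" by blast
    have yE: "y \<in> E" using J(1) y(1) by blast
    have "dd y \<in> sp E (E - J)" using J(1) yE unfolding ind by blast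
    moreover have "sp E (E - J) \<subseteq> sp E ((E - I) - {y})" using J(2) y by (intro sp_mono) blast
    ultimately have yS: "dd y \<in> sp E ((E - I) - {y})" by blast
    have I'E: "I' \<subseteq> E" "dd ` E \<subseteq> sp E (E - I')" using mx unfolding maximal_in_def ind by blast+
    have min: "\<forall>z\<in>E - I'. dd z \<notin> sp E ((E - I') - {z})"
    proof (intro ballI notI)
      fix z assume z: "z \<in> E - I'" "dd z \<in> sp E ((E - I') - {z})"
      then have "insert z I' \<in> ?I" using ins_ind[OF assms I'E] by blast
      then have "insert z I' = I'" using mx unfolding maximal_in_def by blast
      then show False using z by blast
    qed
    obtain x where x: "x \<in> (E - I) - (E - I')" "dd x \<in> sp E ((E - I) - {x})"
      using exch[OF min, of y "E - I"] yE y(2) yS by blast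
    have IE: "I \<subseteq> E" "dd ` E \<subseteq> sp E (E - I)" using I unfolding ind by blast+
    have "insert x I \<in> ?I" using ins_ind[OF assms IE, of x] x by blast
    then show ?thesis using x by blast
  qed
  have IM: "\<exists>M. maximal_in {I'\<in>?I. I \<subseteq> I' \<and> I' \<subseteq> X} M"
    if I: "I \<in> ?I" and IX: "I \<subseteq> X" and XE: "X \<subseteq> E" for I X
  proof -
    let ?G = "sp E (E - X)"
    have subG: "fv.subspace ?G" unfolding sp_def by (rule fv.subspace_span)
    obtain B0 where B0: "B0 \<subseteq> ?G" "fv.independent B0" "?G \<subseteq> fv.span B0"
      by (rule fv.maximal_independent_subset)
    have spB0: "fv.span B0 \<subseteq> ?G" using B0(1) subG by (rule fv.span_minimal)
    obtain B1 where B1: "B0 \<subseteq> B1" "B1 \<subseteq> B0 \<union> dd ` (E - I)" "fv.independent B1"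
      "B0 \<union> dd ` (E - I) \<subseteq> fv.span B1"
      using fv.maximal_independent_subset_extend[of B0 "B0 \<union> dd ` (E - I)"] B0(2) by blast
    define J where "J = {e\<in>X. dd e \<notin> B1 - B0}"
    have IE: "I \<subseteq> E" "dd ` E \<subseteq> sp E (E - I)" using I unfolding ind by blast+
    have vvG: "range (vv E) \<subseteq> ?G" unfolding sp_def by (auto intro: fv.span_base)
    have spB0B1: "fv.span B0 \<subseteq> fv.span B1" using B1(1) by (rule fv.span_mono)
    have "range (vv E) \<union> dd ` (E - I) \<subseteq> fv.span B1"
      using vvG B0(3) spB0B1 B1(4) by blast
    then have s1: "sp E (E - I) \<subseteq> fv.span B1" by (rule sp_subI)
    have "B1 \<subseteq> sp E (E - J)"
    proof
      fix b assume b: "b \<in> B1"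
      show "b \<in> sp E (E - J)"
      proof (cases "b \<in> B0")
        case True
        have "?G \<subseteq> sp E (E - J)" unfolding J_def by (rule sp_mono) blast
        then show ?thesis using True B0(1) by blast
      next
        case False
        then obtain f where f: "f \<in> E - I" "b = dd f" using b B1(2) by blast
        then have "f \<in> E - J" unfolding J_def using b False by blast
        then show ?thesis unfolding sp_def f(2) by (intro fv.span_base) blast
      qed
    qed
    then have "fv.span B1 \<subseteq> sp E (E - J)" unfolding sp_def by (rule fv.span_minimal) (rule fv.subspace_span)
    then have JI: "J \<in> ?I" unfolding ind J_def using IE(2) s1 XE by blast
    have IJ: "I \<subseteq> J"
    proof
      fix e assume e: "e \<in> I"
      have "dd e \<notin> B1 - B0"
      proof
        assume "dd e \<in> B1 - B0"
        then obtain f where "f \<in> E - I" "dd e = dd f" using B1(2) by blast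
        then show False using e inj_dd by (auto dest: injD)
      qed
      then show "e \<in> J" using e IX unfolding J_def by blast
    qed
    have "maximal_in {I'\<in>?I. I \<subseteq> I' \<and> I' \<subseteq> X} J"
      unfolding maximal_in_def
    proof (intro conjI ballI impI)
      show "J \<in> {I'\<in>?I. I \<subseteq> I' \<and> I' \<subseteq> X}" using JI IJ unfolding J_def by blast
    next
      fix J' assume J': "J' \<in> {I'\<in>?I. I \<subseteq> I' \<and> I' \<subseteq> X}" and JJ': "J \<subseteq> J'"
      show "J' = J"
      proof (rule ccontr)
        assume "J' \<noteq> J"
        then obtain e where e: "e \<in> J'" "e \<notin> J" using JJ' by blast
        then have eX: "e \<in> X" and eB: "dd e \<in> B1 - B0" using J' unfolding J_def by blast+
        have eE: "e \<in> E" using eX XE by blast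
        have "dd e \<in> sp E (E - J')" using J' eE unfolding ind by blast
        moreover have "sp E (E - J') \<subseteq> fv.span (B1 - {dd e})"
        proof (rule sp_subI)
          have B0s: "fv.span B0 \<subseteq> fv.span (B1 - {dd e})" using B1(1) eB by (intro fv.span_mono) blast
          show "range (vv E) \<union> dd ` (E - J') \<subseteq> fv.span (B1 - {dd e})"
          proof
            fix v assume v: "v \<in> range (vv E) \<union> dd ` (E - J')"
            show "v \<in> fv.span (B1 - {dd e})"
            proof (cases "v \<in> range (vv E)")
              case True then show ?thesis using vvG B0(3) B0s by blast
            next
              case False
              then obtain f where f: "f \<in> E - J'" "v = dd f" using v by blast
              show ?thesis
              proof (cases "f \<in> X")
                case False
                then have "dd f \<in> ?G" unfolding sp_def using f by (intro fv.span_base) blast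
                then show ?thesis using f B0(3) B0s by blast
              next
                case True
                then have "f \<notin> J" using f JJ' by blast
                then have "dd f \<in> B1 - B0" using True unfolding J_def by blast
                moreover have "f \<noteq> e" using f e by blast
                then have "dd f \<noteq> dd e" using inj_dd by (auto dest: injD)
                ultimately show ?thesis using f by (intro fv.span_base) auto
              qed
            qed
          qed
        qed
        ultimately have "dd e \<in> fv.span (B1 - {dd e})" by blast
        then have "fv.dependent B1" using eB unfolding fv.dependent_def by blast
        then show False using B1(3) by blast
      qed
    qed
    then show ?thesis by blast
  qed
  show ?thesis
    unfolding matroid_def
  proof (intro conjI allI impI ballI)
    show "{} \<in> ?I" unfolding thinly_independent_def by simp
  next
    fix I J assume "I \<in> ?I" "J \<subseteq> I"
    then show "J \<in> ?I" unfolding thinly_independent_def by blast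
  next
    fix I I' assume "I \<in> ?I" "\<not> maximal_in ?I I" "maximal_in ?I I'"
    then show "\<exists>x\<in>I' - I. insert x I \<in> ?I" by (rule I3)
  next
    fix I X assume "I \<in> ?I" "I \<subseteq> X" "X \<subseteq> E"
    then show "\<exists>M. maximal_in {I'\<in>?I. I \<subseteq> I' \<and> I' \<subseteq> X} M" by (rule IM)
  qed auto
qed

end
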